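(* Let $\pi:\Delta\to\mathbb F[\overline A,\overline B,\overline C]$ be the $\mathbb F$-algebra homomorphism sending $A\mapsto\overline A$, $B\mapsto\overline B$, $C\mapsto\overline C$. Then (i) $\langle A,B\rangle$ is the preimage under $\pi$ of the subalgebra $\mathbb F[\overline A,\overline B]$; (ii) $\langle B,C\rangle$ is the preimage of $\mathbb F[\overline B,\overline C]$; (iii) $\langle A,C\rangle$ is the preimage of $\mathbb F[\overline A,\overline C]$.
   Context: Let $\mathbb F$ be a field and fix a nonzero $q\in\mathbb F$ with $q^4\neq 1$. The universal Askey--Wilson algebra $\Delta$ is the associative $\mathbb F$-algebra with 1 with generators $A,B,C$ subject to the relations that each of $A+\frac{qBC-q^{-1}CB}{q^2-q^{-2}}$, $B+\frac{qCA-q^{-1}AC}{q^2-q^{-2}}$, $C+\frac{qAB-q^{-1}BA}{q^2-q^{-2}}$ is central. $\overline A,\overline B,\overline C$ are mutually commuting indeterminates, $\mathbb F[\overline A,\overline B]$ etc. denote the subalgebras of $\mathbb F[\overline A,\overline B,\overline C]$ generated by the indicated variables. For a subset $\mathcal S\subseteq\Delta$, $\langle\mathcal S\rangle$ denotes the $\mathbb F$-subalgebra of $\Delta$ generated by $\mathcal S$. *)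

theory Defs
  imports "HOL-Library.Poly_Mapping"
begin

datatype gen = GA | GB | GC

datatype word = Word "gen list"

instantiation word :: monoid_add
begin
definition zero_word :: word where "zero_word = Word []"
fun plus_word :: "word \<Rightarrow> word \<Rightarrow> word" where
  "plus_word (Word u) (Word v) = Word (u @ v)"
instance
proof
  fix a b c :: word
  show "a + b + c = a + (b + c)" by (cases a; cases b; cases c) simp
  show "0 + a = a" by (cases a) (simp add: zero_word_def)
  show "a + 0 = a" by (cases a) (simp add: zero_word_def)
qed
end

type_synonym 'a freealg = "word \<Rightarrow>\<^sub>0 'a"

definition fscal :: "'a::field \<Rightarrow> 'a freealg" where
  "fscal c = Poly_Mapping.single 0 c"

definition fgen :: "gen \<Rightarrow> 'a::field freealg" where
  "fgen g = Poly_Mapping.single (Word [g]) 1"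

abbreviation "xA \<equiv> fgen GA"
abbreviation "xB \<equiv> fgen GB"
abbreviation "xC \<equiv> fgen GC"

type_synonym 'a cpoly = "(gen \<Rightarrow>\<^sub>0 nat) \<Rightarrow>\<^sub>0 'a"

definition cscal :: "'a::field \<Rightarrow> 'a cpoly" where
  "cscal c = Poly_Mapping.single 0 c"

definition cvar :: "gen \<Rightarrow> 'a::field cpoly" where
  "cvar g = Poly_Mapping.single (Poly_Mapping.single g 1) 1"

inductive_set alg_gen :: "('a \<Rightarrow> 'b::ring_1) \<Rightarrow> 'b set \<Rightarrow> 'b set"
  for emb :: "'a \<Rightarrow> 'b" and S :: "'b set" where
  scal: "emb c \<in> alg_gen emb S"
| base: "s \<in> S \<Longrightarrow> s \<in> alg_gen emb S"
| add: "x \<in> alg_gen emb S \<Longrightarrow> y \<in> alg_gen emb S \<Longrightarrow> x + y \<in> alg_gen emb S"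
| mult: "x \<in> alg_gen emb S \<Longrightarrow> y \<in> alg_gen emb S \<Longrightarrow> x * y \<in> alg_gen emb S"

section \<open>The universal Askey-Wilson algebra Delta = F<A,B,C> / I\<close>

definition aw_alpha :: "'a::field \<Rightarrow> 'a freealg" where
  "aw_alpha q = xA + fscal (q / (q^2 - inverse q ^ 2)) * xB * xC
                   - fscal (inverse q / (q^2 - inverse q ^ 2)) * xC * xB"

definition aw_beta :: "'a::field \<Rightarrow> 'a freealg" where
  "aw_beta q = xB + fscal (q / (q^2 - inverse q ^ 2)) * xC * xA
                  - fscal (inverse q / (q^2 - inverse q ^ 2)) * xA * xC"

definition aw_gamma :: "'a::field \<Rightarrow> 'a freealg" where
  "aw_gamma q = xC + fscal (q / (q^2 - inverse q ^ 2)) * xA * xB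
                   - fscal (inverse q / (q^2 - inverse q ^ 2)) * xB * xA"

text \<open>Two-sided ideal generated by the commutators of the three distinguished
  elements with the generators; it expresses that they are central.\<close>

inductive_set aw_ideal :: "'a::field \<Rightarrow> 'a freealg set" for q :: 'a where
  rel: "z \<in> {aw_alpha q, aw_beta q, aw_gamma q} \<Longrightarrow> x \<in> {xA, xB, xC}
          \<Longrightarrow> z * x - x * z \<in> aw_ideal q"
| zero: "0 \<in> aw_ideal q"
| add: "u \<in> aw_ideal q \<Longrightarrow> v \<in> aw_ideal q \<Longrightarrow> u + v \<in> aw_ideal q"
| lmult: "u \<in> aw_ideal q \<Longrightarrow> f * u \<in> aw_ideal q"
| rmult: "u \<in> aw_ideal q \<Longrightarrow> u * f \<in> aw_ideal q"

text \<open>Elements of Delta are represented by elements of the free algebra (modulo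
  aw_ideal q).  The set of representatives of the subalgebra of Delta generated
  by the images of S, i.e. the preimage of that subalgebra under the quotient map.\<close>

definition aw_subalg :: "'a::field \<Rightarrow> 'a freealg set \<Rightarrow> 'a freealg set" where
  "aw_subalg q S = {f. \<exists>g \<in> alg_gen fscal S. f - g \<in> aw_ideal q}"

primrec word_exp :: "gen list \<Rightarrow> gen \<Rightarrow>\<^sub>0 nat" where
  "word_exp [] = 0"
| "word_exp (g # gs) = Poly_Mapping.single g 1 + word_exp gs"

fun word_mon :: "word \<Rightarrow> gen \<Rightarrow>\<^sub>0 nat" where
  "word_mon (Word ws) = word_exp ws"

text \<open>pi on the free algebra (it kills aw_ideal q, so it induces pi on Delta).\<close>

definition aw_pi :: "'a::field freealg \<Rightarrow> 'a cpoly" where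
  "aw_pi f = (\<Sum>w \<in> Poly_Mapping.keys f. Poly_Mapping.single (word_mon w) (Poly_Mapping.lookup f w))"

end

theory Submission
  imports Defs
begin

definition ksum :: "('k \<Rightarrow> 'b::zero \<Rightarrow> 'c::comm_monoid_add) \<Rightarrow> ('k \<Rightarrow>\<^sub>0 'b) \<Rightarrow> 'c" where
  "ksum F f = (\<Sum>k\<in>Poly_Mapping.keys f. F k (Poly_Mapping.lookup f k))"

lemma ksum_superset:
  assumes "finite S" "Poly_Mapping.keys f \<subseteq> S" "\<And>k. F k 0 = 0"
  shows "ksum F f = (\<Sum>k\<in>S. F k (Poly_Mapping.lookup f k))"
  unfolding ksum_def using assms
  by (intro sum.mono_neutral_left) (auto simp: in_keys_iff)

lemma ksum_add:
  fixes F :: "'k \<Rightarrow> 'b::monoid_add \<Rightarrow> 'c::comm_monoid_add"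
  assumes z: "\<And>k. F k 0 = 0" and a: "\<And>k a b. F k (a+b) = F k a + F k b"
  shows "ksum F (f+g) = ksum F f + ksum F g"
proof -
  let ?S = "Poly_Mapping.keys f \<union> Poly_Mapping.keys g"
  have fin: "finite ?S" by simp
  have "ksum F (f+g) = (\<Sum>k\<in>?S. F k (Poly_Mapping.lookup (f+g) k))"
    by (rule ksum_superset) (use keys_add[of f g] z in auto)
  also have "\<dots> = (\<Sum>k\<in>?S. F k (Poly_Mapping.lookup f k)) + (\<Sum>k\<in>?S. F k (Poly_Mapping.lookup g k))"
    by (simp add: lookup_add a sum.distrib)
  also have "\<dots> = ksum F f + ksum F g"
    using ksum_superset[of ?S f F] ksum_superset[of ?S g F] z by simp
  finally show ?thesis .
qed

lemma ksum_single:
  assumes "\<And>k. F k 0 = 0"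
  shows "ksum F (Poly_Mapping.single k c) = F k c"
  using assms by (cases "c = 0") (auto simp: ksum_def)

lemma ksum_zero[simp]: "ksum F 0 = 0"
  by (simp add: ksum_def)

lemma pm_expansion:
  fixes f :: "'k \<Rightarrow>\<^sub>0 'b::comm_monoid_add"
  shows "f = (\<Sum>w\<in>Poly_Mapping.keys f. Poly_Mapping.single w (Poly_Mapping.lookup f w))"
proof (rule poly_mapping_eqI)
  fix j
  have *: "finite I \<Longrightarrow> Poly_Mapping.lookup (\<Sum>w\<in>I. Poly_Mapping.single w (Poly_Mapping.lookup f w)) j
      = (if j \<in> I then Poly_Mapping.lookup f j else 0)" for I
    by (induction I rule: finite_induct) (auto simp: lookup_single lookup_add when_def)
  show "Poly_Mapping.lookup f j = Poly_Mapping.lookup (\<Sum>w\<in>Poly_Mapping.keys f. Poly_Mapping.single w (Poly_Mapping.lookup f w)) j"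
    by (simp add: * in_keys_iff)
qed

lemma pm_induct:
  fixes f :: "'k \<Rightarrow>\<^sub>0 'b::comm_monoid_add"
  assumes "P 0" "\<And>k c. P (Poly_Mapping.single k c)" "\<And>x y. P x \<Longrightarrow> P y \<Longrightarrow> P (x + y)"
  shows "P f"
proof -
  have "finite I \<Longrightarrow> P (\<Sum>w\<in>I. Poly_Mapping.single w (Poly_Mapping.lookup f w))" for I
    by (induction I rule: finite_induct) (auto intro: assms)
  then show ?thesis by (subst pm_expansion) simp
qed

lemma ksum_linear_sum:
  fixes F :: "'k \<Rightarrow> 'b::comm_monoid_add \<Rightarrow> 'c::comm_monoid_add"
  assumes z: "\<And>k. F k 0 = 0" and a: "\<And>k a b. F k (a+b) = F k a + F k b"
  shows "ksum F f = (\<Sum>w\<in>Poly_Mapping.keys f. F w (Poly_Mapping.lookup f w))"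
  by (simp add: ksum_def)

lemma word_exp_append: "word_exp (xs @ ys) = word_exp xs + word_exp ys"
  by (induction xs) (simp_all add: add.assoc)

lemma word_mon_add: "word_mon (u + v) = word_mon u + word_mon v"
  by (cases u; cases v) (simp add: word_exp_append)

lemma word_mon_zero[simp]: "word_mon 0 = 0"
  by (simp add: zero_word_def)

lemma aw_pi_ksum: "aw_pi f = ksum (\<lambda>w c. Poly_Mapping.single (word_mon w) c) f"
  by (simp add: aw_pi_def ksum_def)

lemma aw_pi_add: "aw_pi (f + g) = aw_pi f + aw_pi g"
  unfolding aw_pi_ksum by (rule ksum_add) (simp_all add: single_add)

lemma aw_pi_single: "aw_pi (Poly_Mapping.single w c) = Poly_Mapping.single (word_mon w) c"
  unfolding aw_pi_ksum by (rule ksum_single) simp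

lemma aw_pi_zero[simp]: "aw_pi 0 = 0"
  by (simp add: aw_pi_def)

lemma aw_pi_uminus: "aw_pi (- f) = - aw_pi f"
proof -
  have "aw_pi (-f) + aw_pi f = 0" using aw_pi_add[of "-f" f] by simp
  then show ?thesis by (simp add: eq_neg_iff_add_eq_0)
qed

lemma aw_pi_diff: "aw_pi (f - g) = aw_pi f - aw_pi g"
  using aw_pi_add[of f "-g"] by (simp add: aw_pi_uminus)

lemma aw_pi_mult: "aw_pi (f * g) = aw_pi f * aw_pi g"
proof (induction f rule: pm_induct)
  case (2 k c)
  show ?case
  proof (induction g rule: pm_induct)
    case (2 l d)
    then show ?case by (simp add: mult_single aw_pi_single word_mon_add)
  next
    case (3 x y)
    then show ?case by (simp add: distrib_left aw_pi_add)
  qed simp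
next
  case (3 x y)
  then show ?case by (simp add: distrib_right aw_pi_add)
qed simp

lemma aw_pi_fscal: "aw_pi (fscal c) = cscal c"
  by (simp add: fscal_def cscal_def aw_pi_single)

lemma aw_pi_fgen: "aw_pi (fgen g) = cvar g"
  by (simp add: fgen_def cvar_def aw_pi_single)


lemma fscal_0[simp]: "fscal 0 = 0" by (simp add: fscal_def)
lemma fscal_1[simp]: "fscal 1 = 1" by (simp add: fscal_def)
lemma fscal_add: "fscal (c + d) = fscal c + fscal d" by (simp add: fscal_def single_add)
lemma fscal_diff: "fscal (c - d) = fscal c - fscal d" by (simp add: fscal_def single_diff)
lemma fscal_uminus: "fscal (- c) = - fscal c" by (simp add: fscal_def single_uminus)
lemma fscal_mult: "fscal (c * d) = fscal c * fscal d" by (simp add: fscal_def mult_single)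

lemma fscal_comm: "fscal c * x = x * fscal c"
proof (induction x rule: pm_induct)
  case (2 k d)
  then show ?case by (simp add: fscal_def mult_single mult.commute)
next
  case (3 x y)
  then show ?case by (simp add: distrib_left distrib_right)
qed simp

lemma fscal_left_comm: "x * (fscal c * y) = fscal c * (x * y)"
  by (metis fscal_comm mult.assoc)

lemma fscal_fscal: "fscal c * (fscal d * y) = fscal (c * d) * y"
  by (simp add: fscal_mult mult.assoc)

lemma fscal_neg1: "fscal (-1) * x = - x"
  by (simp add: fscal_uminus)

lemma single_word_cons: "Poly_Mapping.single (Word (g # l)) c = fgen g * Poly_Mapping.single (Word l) c"
  by (simp add: fgen_def mult_single)

lemma single_word_scal: "Poly_Mapping.single w c = fscal c * Poly_Mapping.single w 1"
  by (simp add: fscal_def mult_single)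

lemma single_word_nil: "Poly_Mapping.single (Word []) (1::'a::field) = 1"
  by (metis single_one zero_word_def)

lemma freealg_induct [case_names scal gen add mult]:
  fixes f :: "'a::field freealg"
  assumes scal: "\<And>c. P (fscal c)" and gen: "\<And>g. P (fgen g)"
    and add: "\<And>x y. P x \<Longrightarrow> P y \<Longrightarrow> P (x + y)"
    and mult: "\<And>x y. P x \<Longrightarrow> P y \<Longrightarrow> P (x * y)"
  shows "P f"
proof (induction f rule: pm_induct)
  case 1 then show ?case using scal[of 0] by simp
next
  case (2 k c)
  obtain l where k: "k = Word l" by (cases k)
  have "P (Poly_Mapping.single (Word l) (1::'a))"
  proof (induction l)
    case Nil then show ?case using scal[of 1] by (simp add: single_word_nil)
  next
    case (Cons g l) then show ?case by (simp add: single_word_cons gen mult)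
  qed
  then show ?case using k by (subst single_word_scal) (simp add: scal mult)
qed (simp add: add)

lemma aw_ideal_neg: "u \<in> aw_ideal q \<Longrightarrow> - u \<in> aw_ideal q"
proof -
  assume "u \<in> aw_ideal q"
  then have "(-1) * u \<in> aw_ideal q" by (rule aw_ideal.lmult)
  then show ?thesis by (simp only: mult_minus1)
qed

lemma aw_ideal_diff: "u \<in> aw_ideal q \<Longrightarrow> v \<in> aw_ideal q \<Longrightarrow> u - v \<in> aw_ideal q"
  unfolding diff_conv_add_uminus by (intro aw_ideal.add aw_ideal_neg)

definition elem :: "'a::field \<Rightarrow> gen \<Rightarrow> gen \<Rightarrow> gen \<Rightarrow> 'a freealg" where
  "elem q a b c = fgen c + fscal (q / (q^2 - inverse q ^ 2)) * fgen a * fgen b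
                   - fscal (inverse q / (q^2 - inverse q ^ 2)) * fgen b * fgen a"

lemma elem_alpha: "aw_alpha q = elem q GB GC GA" unfolding aw_alpha_def elem_def by (rule refl)
lemma elem_beta: "aw_beta q = elem q GC GA GB" unfolding aw_beta_def elem_def by (rule refl)
lemma elem_gamma: "aw_gamma q = elem q GA GB GC" unfolding aw_gamma_def elem_def by (rule refl)

lemma central:
  assumes "z \<in> {aw_alpha q, aw_beta q, aw_gamma q}"
  shows "z * y - y * z \<in> aw_ideal q"
proof (induction y rule: freealg_induct)
  case (scal c) then show ?case by (simp add: fscal_comm aw_ideal.zero)
next
  case (gen g) then show ?case using aw_ideal.rel[OF assms, of "fgen g"] by (cases g) auto
next
  case (add x y)
  then show ?case using aw_ideal.add[OF add.IH] by (simp add: algebra_simps)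
next
  case (mult x y)
  have "z * (x * y) - x * y * z = (z * x - x * z) * y + x * (z * y - y * z)"
    by (simp add: algebra_simps)
  then show ?case using mult aw_ideal.add aw_ideal.rmult aw_ideal.lmult by metis
qed


lemma aw_ideal_rmult': "u \<in> aw_ideal q \<Longrightarrow> u * f \<in> aw_ideal q" by (rule aw_ideal.rmult)
lemma aw_ideal_lmult': "u \<in> aw_ideal q \<Longrightarrow> f * u \<in> aw_ideal q" by (rule aw_ideal.lmult)

lemma aw_pi_ideal: "x \<in> aw_ideal q \<Longrightarrow> aw_pi x = 0"
  by (induction rule: aw_ideal.induct) (auto simp: aw_pi_diff aw_pi_mult aw_pi_add mult.commute)

section \<open>Commutator ideals\<close>

inductive_set Jset :: "gen \<Rightarrow> gen \<Rightarrow> 'a::field freealg set" for a b where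
  gen: "fgen a * fgen b - fgen b * fgen a \<in> Jset a b"
| zero: "0 \<in> Jset a b"
| add: "u \<in> Jset a b \<Longrightarrow> v \<in> Jset a b \<Longrightarrow> u + v \<in> Jset a b"
| neg: "u \<in> Jset a b \<Longrightarrow> - u \<in> Jset a b"
| lm: "u \<in> Jset a b \<Longrightarrow> g \<in> alg_gen fscal {fgen a, fgen b} \<Longrightarrow> g * u \<in> Jset a b"
| rm: "u \<in> Jset a b \<Longrightarrow> g \<in> alg_gen fscal {fgen a, fgen b} \<Longrightarrow> u * g \<in> Jset a b"

inductive_set Kset :: "'a::field freealg set" where
  gen: "fgen g * fgen h - fgen h * fgen g \<in> Kset"
| zero: "0 \<in> Kset"
| add: "u \<in> Kset \<Longrightarrow> v \<in> Kset \<Longrightarrow> u + v \<in> Kset"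
| lm: "u \<in> Kset \<Longrightarrow> g * u \<in> Kset"
| rm: "u \<in> Kset \<Longrightarrow> u * g \<in> Kset"

lemma Kset_neg: "u \<in> Kset \<Longrightarrow> - u \<in> Kset"
proof -
  assume "u \<in> Kset"
  then have "(-1) * u \<in> Kset" by (rule Kset.lm)
  then show ?thesis by (simp only: mult_minus1)
qed

lemma Kset_diff: "u \<in> Kset \<Longrightarrow> v \<in> Kset \<Longrightarrow> u - v \<in> Kset"
  unfolding diff_conv_add_uminus by (intro Kset.add Kset_neg)

lemma comm_gen_K: "fgen g * y - y * fgen g \<in> (Kset :: 'a::field freealg set)"
proof (induction y rule: freealg_induct)
  case (scal c) then show ?case by (simp add: fscal_comm Kset.zero)
next
  case (gen h) then show ?case by (rule Kset.gen)
next
  case (add x y)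
  have "fgen g * (x + y) - (x + y) * fgen g = (fgen g * x - x * fgen g) + (fgen g * y - y * fgen g)"
    by (simp add: algebra_simps)
  then show ?case using add Kset.add by metis
next
  case (mult x y)
  have "fgen g * (x * y) - x * y * fgen g = (fgen g * x - x * fgen g) * y + x * (fgen g * y - y * fgen g)"
    by (simp add: algebra_simps)
  then show ?case using mult Kset.add Kset.lm Kset.rm by metis
qed

lemma comm_K: "x * y - y * x \<in> (Kset :: 'a::field freealg set)"
proof (induction x rule: freealg_induct)
  case (scal c) then show ?case by (simp add: fscal_comm Kset.zero)
next
  case (gen h) then show ?case by (rule comm_gen_K)
next
  case (add x z)
  have "(x + z) * y - y * (x + z) = (x * y - y * x) + (z * y - y * z)"
    by (simp add: algebra_simps)
  then show ?case using add Kset.add by metis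
next
  case (mult x z)
  have "x * z * y - y * (x * z) = x * (z * y - y * z) + (x * y - y * x) * z"
    by (simp add: algebra_simps)
  then show ?case using mult Kset.add Kset.lm Kset.rm by metis
qed


section \<open>The main argument for a cyclic triple\<close>

context
  fixes q :: "'a::field" and a b c :: gen
  assumes cenG: "\<And>y. elem q a b c * y - y * elem q a b c \<in> aw_ideal q"
    and cenA: "\<And>y. elem q b c a * y - y * elem q b c a \<in> aw_ideal q"
    and dab: "a \<noteq> b" and dbc: "b \<noteq> c" and dac: "a \<noteq> c"
    and univ: "\<And>g. g = a \<or> g = b \<or> g = c"
    and st: "q / (q^2 - inverse q ^ 2) - inverse q / (q^2 - inverse q ^ 2) \<noteq> 0"
begin

abbreviation "Alg \<equiv> alg_gen fscal {fgen a, fgen b}"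
abbreviation "RR \<equiv> aw_subalg q {fgen a, fgen b}"
abbreviation "II \<equiv> aw_ideal q"
abbreviation "Gm \<equiv> elem q a b c"
abbreviation "sc \<equiv> q / (q^2 - inverse q ^ 2)"
abbreviation "tc \<equiv> inverse q / (q^2 - inverse q ^ 2)"
abbreviation "XX \<equiv> fscal sc * fgen a * fgen b - fscal tc * fgen b * fgen a"
abbreviation "YY \<equiv> fgen a - fscal sc * fgen b * XX + fscal tc * XX * fgen b"

lemma Alg_neg: "x \<in> Alg \<Longrightarrow> - x \<in> Alg"
  using alg_gen.mult[OF alg_gen.scal[of fscal "-1"], of x] by (simp add: fscal_neg1)

lemma Alg_diff: "x \<in> Alg \<Longrightarrow> y \<in> Alg \<Longrightarrow> x - y \<in> Alg"
  unfolding diff_conv_add_uminus by (intro alg_gen.add Alg_neg)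

lemma Alg_a: "fgen a \<in> Alg" by (rule alg_gen.base) simp
lemma Alg_b: "fgen b \<in> Alg" by (rule alg_gen.base) simp
lemma Alg_s: "fscal d \<in> Alg" by (rule alg_gen.scal)

lemma XX_Alg: "XX \<in> Alg"
  by (intro Alg_diff alg_gen.mult Alg_a Alg_b Alg_s)

lemma YY_Alg: "YY \<in> Alg"
  by (intro alg_gen.add Alg_diff alg_gen.mult Alg_a Alg_b Alg_s XX_Alg)

lemma RR_cong: "x \<in> RR \<Longrightarrow> y - x \<in> II \<Longrightarrow> y \<in> RR"
proof -
  assume "x \<in> RR" "y - x \<in> II"
  then obtain g where g: "g \<in> Alg" "x - g \<in> II" by (auto simp: aw_subalg_def)
  have "y - g = (y - x) + (x - g)" by simp
  then have "y - g \<in> II" using g \<open>y - x \<in> II\<close> aw_ideal.add by metis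
  then show ?thesis using g by (auto simp: aw_subalg_def)
qed

lemma Alg_RR: "x \<in> Alg \<Longrightarrow> x \<in> RR"
  by (auto simp: aw_subalg_def intro!: bexI[of _ x] aw_ideal.zero)

lemma II_RR: "x \<in> II \<Longrightarrow> x \<in> RR"
  using RR_cong[OF Alg_RR[OF alg_gen.scal[of fscal 0]], of x] by simp

lemma RR_add: "x \<in> RR \<Longrightarrow> y \<in> RR \<Longrightarrow> x + y \<in> RR"
proof -
  assume "x \<in> RR" "y \<in> RR"
  then obtain g h where g: "g \<in> Alg" "x - g \<in> II" "h \<in> Alg" "y - h \<in> II" by (auto simp: aw_subalg_def)
  have "x + y - (g + h) = (x - g) + (y - h)" by simp
  then have "x + y - (g + h) \<in> II" using g aw_ideal.add by metis
  then show ?thesis unfolding aw_subalg_def using g by (blast intro: alg_gen.add)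
qed

lemma RR_mult: "x \<in> RR \<Longrightarrow> y \<in> RR \<Longrightarrow> x * y \<in> RR"
proof -
  assume "x \<in> RR" "y \<in> RR"
  then obtain g h where g: "g \<in> Alg" "x - g \<in> II" "h \<in> Alg" "y - h \<in> II" by (auto simp: aw_subalg_def)
  have "x * y - (g * h) = (x - g) * y + g * (y - h)" by (simp add: algebra_simps)
  then have "x * y - (g * h) \<in> II" using g aw_ideal.add aw_ideal.lmult aw_ideal.rmult by metis
  then show ?thesis unfolding aw_subalg_def using g by (blast intro: alg_gen.mult)
qed

lemma RR_neg: "x \<in> RR \<Longrightarrow> - x \<in> RR"
  using RR_mult[OF Alg_RR[OF alg_gen.scal[of fscal "-1"]], of x] by (simp add: fscal_neg1)

lemma RR_diff: "x \<in> RR \<Longrightarrow> y \<in> RR \<Longrightarrow> x - y \<in> RR"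
  unfolding diff_conv_add_uminus by (intro RR_add RR_neg)

lemma c_eq: "fgen c = Gm - XX"
  by (simp add: elem_def algebra_simps)

lemma cenGpow: "Gm ^ k * y - y * Gm ^ k \<in> II"
proof (induction k)
  case 0 then show ?case by (simp add: aw_ideal.zero)
next
  case (Suc k)
  have "Gm ^ Suc k * y - y * Gm ^ Suc k = Gm * (Gm ^ k * y - y * Gm ^ k) + (Gm * y - y * Gm) * Gm ^ k"
    by (simp add: algebra_simps)
  then show ?case using Suc cenG aw_ideal.add aw_ideal.lmult aw_ideal.rmult by metis
qed

lemma alpha_eq:
  "elem q b c a = fscal (sc - tc) * fgen b * Gm + YY + fscal tc * (fgen b * Gm - Gm * fgen b)"
proof -
  have gen: "fgen a + fscal sc * fgen b * (G - X) - fscal tc * (G - X) * fgen b =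
     fscal (sc - tc) * fgen b * G + (fgen a - fscal sc * fgen b * X + fscal tc * X * fgen b)
       + fscal tc * (fgen b * G - G * fgen b)" for G X :: "'a freealg"
    by (simp add: algebra_simps fscal_diff)
  have "elem q b c a = fgen a + fscal sc * fgen b * fgen c - fscal tc * fgen c * fgen b"
    by (simp add: elem_def)
  also have "\<dots> = fgen a + fscal sc * fgen b * (Gm - XX) - fscal tc * (Gm - XX) * fgen b"
    by (simp only: c_eq)
  also have "\<dots> = fscal (sc - tc) * fgen b * Gm + YY + fscal tc * (fgen b * Gm - Gm * fgen b)"
    by (rule gen)
  finally show ?thesis .
qed

lemma key:
  "(fgen a * fgen b - fgen b * fgen a) * Gm - fscal (1 / (sc - tc)) * (YY * fgen a - fgen a * YY) \<in> II"
proof -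
  let ?A = "fgen a" and ?B = "fgen b" and ?al = "elem q b c a"
  have h1: "?al * ?A - ?A * ?al \<in> II" by (rule cenA)
  have h2: "Gm * ?A - ?A * Gm \<in> II" by (rule cenG)
  have h3: "Gm * ?B - ?B * Gm \<in> II" by (rule cenG)
  have iden: "fscal (sc - tc) * ((?A * ?B - ?B * ?A) * Gm) - (YY * ?A - ?A * YY) =
      - (?al * ?A - ?A * ?al) + fscal (sc - tc) * (?B * (Gm * ?A - ?A * Gm))
      + fscal tc * (- (Gm * ?B - ?B * Gm) * ?A - ?A * (- (Gm * ?B - ?B * Gm)))"
  proof -
    have gen: "fscal (sc - tc) * ((?A * ?B - ?B * ?A) * G) - (Y * ?A - ?A * Y) =
      - ((fscal (sc - tc) * ?B * G + Y + fscal tc * (?B * G - G * ?B)) * ?A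
         - ?A * (fscal (sc - tc) * ?B * G + Y + fscal tc * (?B * G - G * ?B)))
      + fscal (sc - tc) * (?B * (G * ?A - ?A * G))
      + fscal tc * (- (G * ?B - ?B * G) * ?A - ?A * (- (G * ?B - ?B * G)))" for G Y :: "'a freealg"
      by (simp add: algebra_simps fscal_diff fscal_left_comm)
    show ?thesis unfolding alpha_eq by (rule gen)
  qed
  have "fscal (sc - tc) * ((?A * ?B - ?B * ?A) * Gm) - (YY * ?A - ?A * YY) \<in> II"
    unfolding iden
    by (intro aw_ideal.add aw_ideal_neg aw_ideal.lmult aw_ideal_diff aw_ideal.rmult h1 h2 h3)
  then have "fscal (1 / (sc - tc)) * (fscal (sc - tc) * ((?A * ?B - ?B * ?A) * Gm) - (YY * ?A - ?A * YY)) \<in> II"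
    by (rule aw_ideal.lmult)
  moreover have "fscal (1 / (sc - tc)) * (fscal (sc - tc) * ((?A * ?B - ?B * ?A) * Gm) - (YY * ?A - ?A * YY))
     = (?A * ?B - ?B * ?A) * Gm - fscal (1 / (sc - tc)) * (YY * ?A - ?A * YY)"
  proof -
    have gen: "fscal (1 / d) * (fscal d * Z - W) = Z - fscal (1 / d) * W" if "d \<noteq> 0" for d and Z W :: "'a freealg"
    proof -
      have e: "(1 / d) * d = 1" using that by simp
      show ?thesis by (simp only: right_diff_distrib fscal_fscal e fscal_1 mult_1_left)
    qed
    show ?thesis by (rule gen[OF st])
  qed
  ultimately show ?thesis by simp
qed

lemma J_Alg: "u \<in> Jset a b \<Longrightarrow> u \<in> Alg"
  by (induction rule: Jset.induct)
    (auto intro: Alg_diff alg_gen.mult alg_gen.add Alg_neg Alg_a Alg_b alg_gen.scal[of fscal 0, simplified])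

lemma J_diff: "u \<in> Jset a b \<Longrightarrow> v \<in> Jset a b \<Longrightarrow> u - v \<in> Jset a b"
  unfolding diff_conv_add_uminus by (intro Jset.add Jset.neg)

lemma comm_J: "y \<in> Alg \<Longrightarrow> y * fgen a - fgen a * y \<in> Jset a b"
proof (induction rule: alg_gen.induct)
  case (scal d) then show ?case by (simp add: fscal_comm Jset.zero)
next
  case (base s)
  then consider "s = fgen a" | "s = fgen b" by blast
  then show ?case
  proof cases
    case 1 then show ?thesis by (simp add: Jset.zero)
  next
    case 2
    have "fgen b * fgen a - fgen a * fgen b = - (fgen a * fgen b - fgen b * fgen a)" by simp
    then show ?thesis using 2 Jset.neg[OF Jset.gen] by metis
  qed
next
  case (add x y)
  have "(x + y) * fgen a - fgen a * (x + y) = (x * fgen a - fgen a * x) + (y * fgen a - fgen a * y)"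
    by (simp add: algebra_simps)
  then show ?case using add Jset.add by metis
next
  case (mult x y)
  have "x * y * fgen a - fgen a * (x * y) = x * (y * fgen a - fgen a * y) + (x * fgen a - fgen a * x) * y"
    by (simp add: algebra_simps)
  then show ?case using mult Jset.add Jset.lm Jset.rm by metis
qed

lemma JG: "u \<in> Jset a b \<Longrightarrow> u * Gm ^ k \<in> RR"
proof (induction k arbitrary: u)
  case 0 then show ?case by (auto intro: Alg_RR J_Alg)
next
  case (Suc k)
  from Suc.prems show ?case
  proof (induction rule: Jset.induct)
    case gen
    let ?W = "fscal (1 / (sc - tc)) * (YY * fgen a - fgen a * YY)"
    have "?W \<in> Jset a b" by (intro Jset.lm comm_J YY_Alg Alg_s)
    then have W: "?W * Gm ^ k \<in> RR" by (rule Suc.IH)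
    have "(fgen a * fgen b - fgen b * fgen a) * Gm ^ Suc k - ?W * Gm ^ k
        = ((fgen a * fgen b - fgen b * fgen a) * Gm - ?W) * Gm ^ k"
      by (simp add: algebra_simps)
    then have "(fgen a * fgen b - fgen b * fgen a) * Gm ^ Suc k - ?W * Gm ^ k \<in> II"
      using aw_ideal.rmult[OF key] by metis
    then show ?case using RR_cong[OF W] by blast
  next
    case zero then show ?case using Alg_RR[OF alg_gen.scal[of fscal 0]] by simp
  next
    case (add u v) then show ?case by (simp add: distrib_right RR_add)
  next
    case (neg u) then show ?case by (simp add: RR_neg)
  next
    case (lm u g) then show ?case by (simp add: mult.assoc RR_mult Alg_RR)
  next
    case (rm u g)
    have "u * g * Gm ^ Suc k - u * Gm ^ Suc k * g = u * (- (Gm ^ Suc k * g - g * Gm ^ Suc k))"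
      by (simp add: algebra_simps)
    then have "u * g * Gm ^ Suc k - u * Gm ^ Suc k * g \<in> II"
      using aw_ideal.lmult[OF aw_ideal_neg[OF cenGpow]] by metis
    moreover have "u * Gm ^ Suc k * g \<in> RR" using rm by (simp add: RR_mult Alg_RR)
    ultimately show ?case using RR_cong by blast
  qed
qed

abbreviation "TT \<equiv> {t. \<forall>k. t * Gm ^ k \<in> RR}"

lemma T_I: "x \<in> II \<Longrightarrow> x \<in> TT"
  by (auto intro: II_RR aw_ideal.rmult)

lemma T_add: "x \<in> TT \<Longrightarrow> y \<in> TT \<Longrightarrow> x + y \<in> TT"
  by (auto simp: distrib_right intro: RR_add)

lemma T_neg: "x \<in> TT \<Longrightarrow> - x \<in> TT"
  by (auto intro: RR_neg)

lemma T_diff: "x \<in> TT \<Longrightarrow> y \<in> TT \<Longrightarrow> x - y \<in> TT"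
  unfolding diff_conv_add_uminus by (intro T_add T_neg)

lemma T_J: "u \<in> Jset a b \<Longrightarrow> u \<in> TT"
  using JG by blast

lemma T_lmult: "t \<in> TT \<Longrightarrow> f * t \<in> TT"
proof (induction f arbitrary: t rule: freealg_induct)
  case (scal d) then show ?case by (auto simp: mult.assoc intro: RR_mult Alg_RR Alg_s)
next
  case (gen g)
  consider "g = a" | "g = b" | "g = c" using univ by blast
  then show ?case
  proof cases
    case 1 then show ?thesis using gen by (auto simp: mult.assoc intro: RR_mult Alg_RR Alg_a)
  next
    case 2 then show ?thesis using gen by (auto simp: mult.assoc intro: RR_mult Alg_RR Alg_b)
  next
    case 3
    show ?thesis
    proof (intro CollectI allI)
      fix k
      have t1: "t * Gm ^ Suc k \<in> RR" using gen by blast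
      have t2: "t * Gm ^ k \<in> RR" using gen by blast
      have "Gm * t * Gm ^ k - t * Gm ^ Suc k = (Gm * t - t * Gm) * Gm ^ k"
        by (simp add: algebra_simps)
      then have "Gm * t * Gm ^ k - t * Gm ^ Suc k \<in> II" using aw_ideal.rmult[OF cenG] by metis
      then have g1: "Gm * t * Gm ^ k \<in> RR" using RR_cong[OF t1] by blast
      have g2: "XX * t * Gm ^ k \<in> RR" using RR_mult[OF Alg_RR[OF XX_Alg] t2] by (simp add: mult.assoc)
      have "fgen g * t * Gm ^ k = Gm * t * Gm ^ k - XX * t * Gm ^ k"
        by (simp only: 3 c_eq left_diff_distrib)
      then show "fgen g * t * Gm ^ k \<in> RR" using RR_diff[OF g1 g2] by simp
    qed
  qed
next
  case (add x y)
  show ?case using T_add[OF add.IH(1)[OF add.prems] add.IH(2)[OF add.prems]] by (simp add: distrib_right)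
next
  case (mult x y) show ?case using mult.IH(1)[OF mult.IH(2)[OF mult.prems]] by (simp add: mult.assoc)
qed

lemma T_rmult: "t \<in> TT \<Longrightarrow> t * f \<in> TT"
proof (induction f arbitrary: t rule: freealg_induct)
  case (scal d)
  have "t * fscal d * Gm ^ k = fscal d * (t * Gm ^ k)" for k
    by (simp add: fscal_comm mult.assoc)
  then show ?case using scal by (auto intro: RR_mult Alg_RR Alg_s)
next
  case (gen g)
  have ab: "t * x * Gm ^ k \<in> RR" if "x \<in> Alg" for x k
  proof -
    have "t * x * Gm ^ k - t * Gm ^ k * x = t * (- (Gm ^ k * x - x * Gm ^ k))"
      by (simp add: algebra_simps)
    then have "t * x * Gm ^ k - t * Gm ^ k * x \<in> II"
      using aw_ideal.lmult[OF aw_ideal_neg[OF cenGpow]] by metis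
    moreover have "t * Gm ^ k * x \<in> RR" using gen that by (auto intro: RR_mult Alg_RR)
    ultimately show ?thesis using RR_cong by blast
  qed
  consider "g = a" | "g = b" | "g = c" using univ by blast
  then show ?case
  proof cases
    case 1 then show ?thesis using ab Alg_a by blast
  next
    case 2 then show ?thesis using ab Alg_b by blast
  next
    case 3
    show ?thesis
    proof (intro CollectI allI)
      fix k
      have t1: "t * Gm ^ Suc k \<in> RR" using gen by blast
      have "fgen g * Gm ^ k = Gm ^ Suc k - XX * Gm ^ k" by (simp only: 3 c_eq left_diff_distrib power_Suc)
      then have "t * fgen g * Gm ^ k = t * Gm ^ Suc k - t * XX * Gm ^ k"
      proof -
        assume e: "fgen g * Gm ^ k = Gm ^ Suc k - XX * Gm ^ k"
        have "t * fgen g * Gm ^ k = t * (fgen g * Gm ^ k)" by (rule mult.assoc)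
        also have "\<dots> = t * (Gm ^ Suc k - XX * Gm ^ k)" by (simp only: e)
        also have "\<dots> = t * Gm ^ Suc k - t * (XX * Gm ^ k)" by (rule right_diff_distrib)
        also have "\<dots> = t * Gm ^ Suc k - t * XX * Gm ^ k" by (simp only: mult.assoc)
        finally show ?thesis .
      qed
      then show "t * fgen g * Gm ^ k \<in> RR" using RR_diff[OF t1 ab[OF XX_Alg]] by simp
    qed
  qed
next
  case (add x y)
  show ?case using T_add[OF add.IH(1)[OF add.prems] add.IH(2)[OF add.prems]] by (simp add: distrib_left)
next
  case (mult x y) show ?case using mult.IH(2)[OF mult.IH(1)[OF mult.prems]] by (simp add: mult.assoc)
qed

lemma T_ab: "fgen a * fgen b - fgen b * fgen a \<in> TT"
  by (rule T_J[OF Jset.gen])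

lemma T_gens: "fgen g * fgen h - fgen h * fgen g \<in> TT"
proof -
  let ?A = "fgen a" and ?B = "fgen b" and ?C = "fgen c"
  let ?K = "?A * ?B - ?B * ?A"
  have sw: "x * y - y * x \<in> TT" if "y * x - x * y \<in> TT" for x y :: "'a freealg"
    using T_neg[OF that] by simp
  have ac: "?A * ?C - ?C * ?A \<in> TT"
  proof -
    have "?A * ?C - ?C * ?A = - (Gm * ?A - ?A * Gm) - (fscal sc * (?A * ?K) - fscal tc * (?K * ?A))"
      unfolding c_eq by (simp add: algebra_simps fscal_left_comm)
    moreover have "fscal sc * (?A * ?K) - fscal tc * (?K * ?A) \<in> TT"
      by (intro T_diff T_lmult T_rmult T_ab)
    ultimately show ?thesis using T_diff[OF T_I[OF aw_ideal_neg[OF cenG]]] by simp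
  qed
  have bc: "?B * ?C - ?C * ?B \<in> TT"
  proof -
    have "?B * ?C - ?C * ?B = - (Gm * ?B - ?B * Gm) - (fscal tc * (?B * ?K) - fscal sc * (?K * ?B))"
      unfolding c_eq by (simp add: algebra_simps fscal_left_comm)
    moreover have "fscal tc * (?B * ?K) - fscal sc * (?K * ?B) \<in> TT"
      by (intro T_diff T_lmult T_rmult T_ab)
    ultimately show ?thesis using T_diff[OF T_I[OF aw_ideal_neg[OF cenG]]] by simp
  qed
  have z: "x * x - x * x \<in> TT" for x :: "'a freealg"
    using T_I[OF aw_ideal.zero] by simp
  have ba: "?B * ?A - ?A * ?B \<in> TT" by (rule sw[OF T_ab])
  have ca: "?C * ?A - ?A * ?C \<in> TT" by (rule sw[OF ac])
  have cb: "?C * ?B - ?B * ?C \<in> TT" by (rule sw[OF bc])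
  from univ[of g] univ[of h] show ?thesis
    by (elim disjE) (simp_all only: T_ab ac bc ba ca cb z)
qed

lemma K_T: "u \<in> Kset \<Longrightarrow> u \<in> TT"
proof (induction rule: Kset.induct)
  case (gen g h) then show ?case by (rule T_gens)
next
  case zero then show ?case using T_I[OF aw_ideal.zero] by simp
next
  case (add u v) then show ?case using T_add by blast
next
  case (lm u g) then show ?case using T_lmult by blast
next
  case (rm u g) then show ?case using T_rmult by blast
qed

lemma K_RR: "u \<in> Kset \<Longrightarrow> u \<in> RR"
  using K_T[of u] by (metis (mono_tags, lifting) mem_Collect_eq mult_1_right power_0)

definition canon :: "(gen \<Rightarrow>\<^sub>0 nat) \<Rightarrow> 'a freealg" where
  "canon m = fgen a ^ Poly_Mapping.lookup m a * fgen b ^ Poly_Mapping.lookup m b * fgen c ^ Poly_Mapping.lookup m c"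

lemma lookup_word_exp_Cons:
  "Poly_Mapping.lookup (word_exp (g # l)) h = (if g = h then 1 else 0) + Poly_Mapping.lookup (word_exp l) h"
  by (simp add: lookup_add lookup_single when_def)

lemma word_canon: "Poly_Mapping.single (Word l) (1::'a) - canon (word_exp l) \<in> Kset"
proof (induction l)
  case Nil
  show ?case by (simp add: single_word_nil canon_def Kset.zero)
next
  case (Cons g l)
  let ?i = "Poly_Mapping.lookup (word_exp l) a" and ?j = "Poly_Mapping.lookup (word_exp l) b"
    and ?k = "Poly_Mapping.lookup (word_exp l) c"
  let ?W = "Poly_Mapping.single (Word l) (1::'a)"
  have cn: "canon (word_exp l) = fgen a ^ ?i * fgen b ^ ?j * fgen c ^ ?k" by (simp add: canon_def)
  have W': "Poly_Mapping.single (Word (g # l)) (1::'a) = fgen g * ?W" by (rule single_word_cons)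
  consider "g = a" | "g = b" | "g = c" using univ by blast
  then show ?case
  proof cases
    case 1
    have cn': "canon (word_exp (g # l)) = fgen a ^ Suc ?i * fgen b ^ ?j * fgen c ^ ?k"
      using 1 dab dac unfolding canon_def lookup_word_exp_Cons by simp
    have id: "A * W - A ^ Suc i * B * C = A * (W - A ^ i * B * C)" for A W B C :: "'a freealg" and i
      by (simp add: algebra_simps)
    show ?thesis unfolding W' cn' unfolding 1 using Kset.lm[OF Cons.IH[unfolded cn]] id by metis
  next
    case 2
    have cn': "canon (word_exp (g # l)) = fgen a ^ ?i * fgen b ^ Suc ?j * fgen c ^ ?k"
      using 2 dab dbc unfolding canon_def lookup_word_exp_Cons by simp
    have id: "B * W - A ^ i * B ^ Suc j * C = B * (W - A ^ i * B ^ j * C) + (B * A ^ i - A ^ i * B) * (B ^ j * C)"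
      for A W B C :: "'a freealg" and i j
      by (simp add: algebra_simps)
    show ?thesis unfolding W' cn' unfolding 2 id
      by (intro Kset.add Kset.lm Kset.rm Cons.IH[unfolded cn] comm_K)
  next
    case 3
    have cn': "canon (word_exp (g # l)) = fgen a ^ ?i * fgen b ^ ?j * fgen c ^ Suc ?k"
      using 3 dac dbc unfolding canon_def lookup_word_exp_Cons by simp
    have id: "C * W - A * C ^ Suc k = C * (W - A * C ^ k) + (C * A - A * C) * C ^ k"
      for A W C :: "'a freealg" and k
      by (simp add: algebra_simps)
    show ?thesis unfolding W' cn' unfolding 3 id
      by (intro Kset.add Kset.lm Kset.rm Cons.IH[unfolded cn] comm_K)
  qed
qed

definition Lam :: "'a cpoly \<Rightarrow> 'a freealg" where
  "Lam p = ksum (\<lambda>m d. fscal d * canon m) p"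

lemma Lam_add: "Lam (p + r) = Lam p + Lam r"
  unfolding Lam_def by (rule ksum_add) (simp_all add: fscal_add distrib_right)

lemma Lam_single: "Lam (Poly_Mapping.single m d) = fscal d * canon m"
  unfolding Lam_def by (rule ksum_single) simp

lemma Lam_zero: "Lam 0 = 0"
  by (simp add: Lam_def)

lemma D_K: "u - Lam (aw_pi u) \<in> Kset"
proof (induction u rule: pm_induct)
  case 1 then show ?case by (simp add: Lam_zero Kset.zero)
next
  case (2 k d)
  obtain l where k: "k = Word l" by (cases k)
  have e1: "aw_pi (Poly_Mapping.single k d) = Poly_Mapping.single (word_exp l) d"
    by (simp add: k aw_pi_single)
  have e2: "Poly_Mapping.single k d = fscal d * Poly_Mapping.single (Word l) 1"
    unfolding k by (rule single_word_scal)
  have "Poly_Mapping.single k d - Lam (aw_pi (Poly_Mapping.single k d))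
      = fscal d * (Poly_Mapping.single (Word l) 1 - canon (word_exp l))"
    unfolding e1 Lam_single by (subst e2) (simp only: right_diff_distrib)
  then show ?case using Kset.lm[OF word_canon] by metis
next
  case (3 x y)
  have "x + y - Lam (aw_pi (x + y)) = (x - Lam (aw_pi x)) + (y - Lam (aw_pi y))"
    by (simp add: aw_pi_add Lam_add)
  then show ?case using Kset.add[OF 3] by metis
qed

lemma ker_RR: "aw_pi u = 0 \<Longrightarrow> u \<in> RR"
  using D_K[of u] by (simp add: Lam_zero K_RR)

lemma pi_Alg: "x \<in> Alg \<Longrightarrow> aw_pi x \<in> alg_gen cscal {cvar a, cvar b}"
proof (induction rule: alg_gen.induct)
  case (scal d) then show ?case by (simp add: aw_pi_fscal alg_gen.scal)
next
  case (base s) then show ?case by (auto simp: aw_pi_fgen intro: alg_gen.base)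
next
  case (add x y) then show ?case by (simp add: aw_pi_add alg_gen.add)
next
  case (mult x y) then show ?case by (simp add: aw_pi_mult alg_gen.mult)
qed

lemma Alg_of_pi: "p \<in> alg_gen cscal {cvar a, cvar b} \<Longrightarrow> \<exists>x\<in>Alg. aw_pi x = p"
proof (induction rule: alg_gen.induct)
  case (scal d) then show ?case by (metis aw_pi_fscal Alg_s)
next
  case (base s) then show ?case using Alg_a Alg_b aw_pi_fgen by blast
next
  case (add x y) then show ?case by (metis aw_pi_add alg_gen.add)
next
  case (mult x y) then show ?case by (metis aw_pi_mult alg_gen.mult)
qed

lemma main_RR: "RR = {f. aw_pi f \<in> alg_gen cscal {cvar a, cvar b}}"
proof (intro set_eqI iffI)
  fix f :: "'a freealg" assume "f \<in> RR"
  then obtain g where g: "g \<in> Alg" "f - g \<in> II" by (auto simp: aw_subalg_def)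
  have "aw_pi f = aw_pi g" using aw_pi_ideal[OF g(2)] by (simp add: aw_pi_diff)
  then show "f \<in> {f. aw_pi f \<in> alg_gen cscal {cvar a, cvar b}}" using pi_Alg[OF g(1)] by simp
next
  fix f :: "'a freealg" assume "f \<in> {f. aw_pi f \<in> alg_gen cscal {cvar a, cvar b}}"
  then obtain x where x: "x \<in> Alg" "aw_pi x = aw_pi f" using Alg_of_pi by blast
  have "aw_pi (f - x) = 0" using x by (simp add: aw_pi_diff)
  then have "f - x \<in> RR" by (rule ker_RR)
  then have "(f - x) + x \<in> RR" by (rule RR_add[OF _ Alg_RR[OF x(1)]])
  then show "f \<in> RR" by simp
qed

end

lemma st_lemma:
  fixes q :: "'a::field"
  assumes q0: "q \<noteq> 0" and q4: "q ^ 4 \<noteq> 1"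
  shows "q / (q^2 - inverse q ^ 2) - inverse q / (q^2 - inverse q ^ 2) \<noteq> 0"
proof -
  have n4: "(4::nat) = 2 + 2" by simp
  have p4: "q ^ 4 = q^2 * q^2" unfolding n4 by (rule power_add)
  have iq: "inverse q * q = 1" using q0 by simp
  have d: "q^2 - inverse q ^ 2 \<noteq> 0"
  proof
    assume "q^2 - inverse q ^ 2 = 0"
    then have h: "q^2 = inverse q ^ 2" by simp
    have "q^2 * q^2 = inverse q ^ 2 * q^2" by (simp only: h)
    also have "\<dots> = (inverse q * q) ^ 2" by (simp only: power_mult_distrib)
    also have "\<dots> = 1" by (simp only: iq power_one)
    finally have "q ^ 4 = 1" unfolding p4 .
    then show False using q4 by blast
  qed
  have e: "q - inverse q \<noteq> 0"
  proof
    assume "q - inverse q = 0"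
    then have h: "q = inverse q" by simp
    have "q * q = inverse q * q" by (subst h) (rule refl)
    then have "q * q = 1" using iq by simp
    then have "q^2 * q^2 = 1" by (simp only: power2_eq_square mult.assoc mult_1_right)
    then have "q ^ 4 = 1" unfolding p4 .
    then show False using q4 by blast
  qed
  have "q / (q^2 - inverse q ^ 2) - inverse q / (q^2 - inverse q ^ 2) = (q - inverse q) / (q^2 - inverse q ^ 2)"
    by (rule diff_divide_distrib[symmetric])
  then show ?thesis using d e divide_eq_0_iff by metis
qed

theorem proposition11p14:
  fixes q :: "'a::field"
  assumes "q \<noteq> 0" and "q ^ 4 \<noteq> 1"
  shows "aw_subalg q {xA, xB} = {f. aw_pi f \<in> alg_gen cscal {cvar GA, cvar GB}} \<and>
         aw_subalg q {xB, xC} = {f. aw_pi f \<in> alg_gen cscal {cvar GB, cvar GC}} \<and>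
         aw_subalg q {xA, xC} = {f. aw_pi f \<in> alg_gen cscal {cvar GA, cvar GC}}"
proof -
  have st: "q / (q^2 - inverse q ^ 2) - inverse q / (q^2 - inverse q ^ 2) \<noteq> 0"
    by (rule st_lemma[OF assms])
  have ca: "\<And>y. elem q GB GC GA * y - y * elem q GB GC GA \<in> aw_ideal q"
    unfolding elem_alpha[symmetric] by (rule central) simp
  have cb: "\<And>y. elem q GC GA GB * y - y * elem q GC GA GB \<in> aw_ideal q"
    unfolding elem_beta[symmetric] by (rule central) simp
  have cg: "\<And>y. elem q GA GB GC * y - y * elem q GA GB GC \<in> aw_ideal q"
    unfolding elem_gamma[symmetric] by (rule central) simp
  have u1: "\<And>g. g = GA \<or> g = GB \<or> g = GC" by (case_tac g) auto
  have u2: "\<And>g. g = GB \<or> g = GC \<or> g = GA" by (case_tac g) auto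
  have u3: "\<And>g. g = GC \<or> g = GA \<or> g = GB" by (case_tac g) auto
  have 1: "aw_subalg q {xA, xB} = {f. aw_pi f \<in> alg_gen cscal {cvar GA, cvar GB}}"
    by (rule main_RR[OF cg ca _ _ _ u1 st]) simp_all
  have 2: "aw_subalg q {xB, xC} = {f. aw_pi f \<in> alg_gen cscal {cvar GB, cvar GC}}"
    by (rule main_RR[OF ca cb _ _ _ u2 st]) simp_all
  have 3: "aw_subalg q {xC, xA} = {f. aw_pi f \<in> alg_gen cscal {cvar GC, cvar GA}}"
    by (rule main_RR[OF cb cg _ _ _ u3 st]) simp_all
  have i1: "{xC, xA} = {xA, xC}" by (rule insert_commute)
  have i2: "{cvar GC, cvar GA} = {cvar GA, cvar GC}" by (rule insert_commute)
  show ?thesis using 1 2 3 unfolding i1 i2 by (intro conjI)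
qed

end
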